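(* For each $n\ge 3$, let $\mathcal D_n$ be the algebra with carrier $\{0,1,\dots,n\}$, constant $0$, and operation defined by: $x\cdot y=\max\{x-y,0\}$ for $x,y\in\{0,\dots,n-1\}$; $n\cdot 0=n$; $n\cdot k=n-k-1$ for $k\in\{1,\dots,n-2\}$; $n\cdot(n-1)=1$; and $k\cdot n=0$ for all $k\in\{0,1,\dots,n\}$. Then $\mathcal D_n$ is a BCK-algebra, and it is not commutative (indeed $(n-1)\wedge n=n-2\neq n-1=n\wedge(n-1)$).
   Context: A BCK-algebra is a set $A$ with a binary operation $\cdot$ and a constant $0$ such that for all $x,y,z\in A$: (BCK1) $((x\cdot y)\cdot(x\cdot z))\cdot(z\cdot y)=0$; (BCK2) $(x\cdot(x\cdot y))\cdot y=0$; (BCK3) $x\cdot x=0$; (BCK4) $0\cdot x=0$; (BCK5) $x\cdot y=0$ and $y\cdot x=0$ imply $x=y$. Define $x\wedge y:=y\cdot(y\cdot x)$; the algebra is commutative if $x\wedge y=y\wedge x$ for all $x,y$. *)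

theory Defs
  imports Main
begin

definition bck_algebra :: "'a set \<Rightarrow> ('a \<Rightarrow> 'a \<Rightarrow> 'a) \<Rightarrow> 'a \<Rightarrow> bool" where
  "bck_algebra A m z \<longleftrightarrow>
     z \<in> A \<and> (\<forall>x\<in>A. \<forall>y\<in>A. m x y \<in> A) \<and>
     (\<forall>x\<in>A. \<forall>y\<in>A. \<forall>w\<in>A. m (m (m x y) (m x w)) (m w y) = z) \<and>
     (\<forall>x\<in>A. \<forall>y\<in>A. m (m x (m x y)) y = z) \<and>
     (\<forall>x\<in>A. m x x = z) \<and>
     (\<forall>x\<in>A. m z x = z) \<and>
     (\<forall>x\<in>A. \<forall>y\<in>A. m x y = z \<and> m y x = z \<longrightarrow> x = y)"

definition bck_meet :: "('a \<Rightarrow> 'a \<Rightarrow> 'a) \<Rightarrow> 'a \<Rightarrow> 'a \<Rightarrow> 'a" where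
  "bck_meet m x y = m y (m y x)"

definition bck_commutative :: "'a set \<Rightarrow> ('a \<Rightarrow> 'a \<Rightarrow> 'a) \<Rightarrow> bool" where
  "bck_commutative A m \<longleftrightarrow> (\<forall>x\<in>A. \<forall>y\<in>A. bck_meet m x y = bck_meet m y x)"

text \<open>The operation of D_n on carrier {0..n}. Natural-number subtraction
  truncates, so x - y = max{x-y,0}.\<close>
definition D_op :: "nat \<Rightarrow> nat \<Rightarrow> nat \<Rightarrow> nat" where
  "D_op n x y =
     (if y = n then 0
      else if x = n then (if y = 0 then n else if y = n - 1 then 1 else n - y - 1)
      else x - y)"

end

theory Submission
  imports Defs
begin

context fixes n :: nat assumes n3: "n \<ge> 3" begin
lemma Dd1[simp]: "D_op n x n = 0" by (simp add: D_op_def)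
lemma Dd2[simp]: "x < n \<Longrightarrow> y < n \<Longrightarrow> D_op n x y = x - y" by (simp add: D_op_def)
lemma Dd3[simp]: "D_op n n 0 = n" using n3 by (simp add: D_op_def)
lemma Dd4[simp]: "D_op n n (n-1) = 1" using n3 by (simp add: D_op_def)
lemma Dd4b[simp]: "D_op n n (n - Suc 0) = 1" using n3 by (simp add: D_op_def)
lemma Dd5[simp]: "0 < y \<Longrightarrow> y < n - 1 \<Longrightarrow> D_op n n y = n - y - 1" using n3 by (simp add: D_op_def)

lemma Dcases4: "y \<le> n \<Longrightarrow> (y = n \<Longrightarrow> P) \<Longrightarrow> (y = n - 1 \<Longrightarrow> P) \<Longrightarrow> (y = 0 \<Longrightarrow> P)
  \<Longrightarrow> (0 < y \<Longrightarrow> y < n - 1 \<Longrightarrow> P) \<Longrightarrow> P" by linarith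

lemma Dbck2:
  assumes "x \<le> n" "y \<le> n"
  shows "D_op n (D_op n x (D_op n x y)) y = 0"
  by (rule Dcases4[OF assms(1)]; rule Dcases4[OF assms(2)]; insert n3 assms; simp)
lemma Dbck5:
  assumes "x \<le> n" "y \<le> n" "D_op n x y = 0" "D_op n y x = 0"
  shows "x = y"
  by (rule Dcases4[OF assms(1)]; rule Dcases4[OF assms(2)]; insert n3 assms; simp)
lemma Dbck1:
  assumes "x \<le> n" "y \<le> n" "w \<le> n"
  shows "D_op n (D_op n (D_op n x y) (D_op n x w)) (D_op n w y) = 0"
  by (rule Dcases4[OF assms(1)]; rule Dcases4[OF assms(2)]; rule Dcases4[OF assms(3)]; insert n3 assms; simp)
end

theorem mainTheorem6:
  fixes n :: nat
  assumes "n \<ge> 3"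
  shows "bck_algebra {0..n} (D_op n) 0 \<and> \<not> bck_commutative {0..n} (D_op n) \<and>
         bck_meet (D_op n) (n - 1) n = n - 2 \<and> bck_meet (D_op n) n (n - 1) = n - 1"
proof -
  have m1: "bck_meet (D_op n) (n - 1) n = n - 2" using assms
    unfolding bck_meet_def D_op_def by (auto simp add: numeral_2_eq_2)
  have m2: "bck_meet (D_op n) n (n - 1) = n - 1" using assms
    unfolding bck_meet_def D_op_def by (auto simp add: numeral_2_eq_2)
  have nc: "\<not> bck_commutative {0..n} (D_op n)"
  proof
    assume "bck_commutative {0..n} (D_op n)"
    hence "bck_meet (D_op n) (n - 1) n = bck_meet (D_op n) n (n - 1)"
      unfolding bck_commutative_def by auto
    with m1 m2 assms show False by simp
  qed
  have cl: "\<forall>x\<in>{0..n}. \<forall>y\<in>{0..n}. D_op n x y \<in> {0..n}"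
    unfolding D_op_def by auto
  have "bck_algebra {0..n} (D_op n) 0"
    unfolding bck_algebra_def
  proof (intro conjI ballI impI)
    fix x assume "x \<in> {0..n}"
    thus "D_op n x x = 0" by (simp add: D_op_def)
  next
    fix x assume "x \<in> {0..n}"
    thus "D_op n 0 x = 0" using assms by (simp add: D_op_def)
  qed (use cl Dbck1[OF assms] Dbck2[OF assms] Dbck5[OF assms] in auto)
  with nc m1 m2 show ?thesis by blast
qed

end
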